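(* Let $b_1>0$, $b_1^*\ge0$, $b_2^*\ge0$, $\sigma>0$, and $\sigma_2^2=\sigma^2+(b_2^* )^2$. With $\alpha\sim N(0,1)$ and $y\sim N(0,\sigma_2^2)$ independent and $u=\frac{\alpha b_1}{\sigma^2}(y+\alpha b_1^* )$, define $S=\mathbb{E}[\tanh(u)+u\tanh'(u)]$. Then $$1-\Bigg(\sqrt{1+\frac{\min\big(\frac{\sigma_2^2}{\sigma^2}b_1,\,b_1^*\big)\,b_1^*}{\sigma_2^2}}\Bigg)^{-1}\le S\le1.$$ *)

theory Defs
  imports "HOL-Probability.Probability"
begin

end

theory Submission
  imports Defs "HOL-Real_Asymp.Real_Asymp"
begin

definition ff :: "real \<Rightarrow> real" where "ff u = tanh u + u * (1 - (tanh u)\<^sup>2)"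

lemma deriv_tanh_eq: "deriv tanh (u::real) = 1 - (tanh u)\<^sup>2"
proof -
  have "(tanh has_field_derivative (1 - (tanh u)\<^sup>2) * 1) (at u)"
    by (rule has_field_derivative_tanh) (auto intro: derivative_eq_intros)
  then show ?thesis by (simp add: DERIV_imp_deriv)
qed

lemma one_minus_tanh_sq: "1 - (tanh (u::real))\<^sup>2 = 1 / (cosh u)\<^sup>2"
proof -
  have "(cosh u)\<^sup>2 - (sinh u)\<^sup>2 = 1" by (simp add: cosh_square_eq)
  moreover have "(cosh u)\<^sup>2 > 0" by simp
  moreover have "1 - (sinh u)\<^sup>2/(cosh u)\<^sup>2 = ((cosh u)\<^sup>2 - (sinh u)\<^sup>2)/(cosh u)\<^sup>2"
    by (simp add: field_simps)
  ultimately show ?thesis by (simp add: tanh_def power_divide)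
qed

lemma cosh_sq_ge_abs: "\<bar>u::real\<bar> \<le> (cosh u)\<^sup>2"
proof -
  have "cosh u = cosh \<bar>u\<bar>" by simp
  also have "cosh \<bar>u\<bar> = (exp \<bar>u\<bar> + exp (-\<bar>u\<bar>)) / 2" by (simp add: cosh_def)
  also have "\<dots> \<ge> (1 + \<bar>u\<bar>) / 2" using exp_ge_add_one_self[of "\<bar>u\<bar>"] exp_gt_zero[of "-\<bar>u\<bar>"] by (smt (verit) divide_right_mono)
  finally have c: "cosh u \<ge> (1 + \<bar>u\<bar>) / 2" .
  have sq: "0 \<le> (\<bar>u\<bar> - 1)\<^sup>2" by simp
  have "\<bar>u\<bar> * \<bar>u\<bar> = u * u" by (simp add: abs_mult_self_eq)
  then have "\<bar>u\<bar> \<le> ((1 + \<bar>u\<bar>) / 2)\<^sup>2" using sq by (simp add: power2_eq_square field_simps algebra_simps)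
  also have "\<dots> \<le> (cosh u)\<^sup>2" using c by (intro power_mono) auto
  finally show ?thesis .
qed

lemma sech_sq_bound: "\<bar>u::real\<bar> * (1 - (tanh u)\<^sup>2) \<le> 1"
  using cosh_sq_ge_abs[of u] by (simp add: one_minus_tanh_sq field_simps)

lemma sech_sq_nonneg: "0 \<le> 1 - (tanh (u::real))\<^sup>2"
  by (simp add: one_minus_tanh_sq)

lemma abs_tanh_le: "\<bar>tanh (u::real)\<bar> \<le> 1"
  using tanh_real_bounds[of u] by auto

lemma ff_bound: "\<bar>ff u\<bar> \<le> 2"
proof -
  have "\<bar>u * (1 - (tanh u)\<^sup>2)\<bar> \<le> 1" using sech_sq_bound[of u] sech_sq_nonneg[of u] by (simp add: abs_mult)
  then show ?thesis unfolding ff_def using abs_tanh_le[of u] by linarith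
qed

lemma ff_cont: "continuous_on UNIV ff"
  unfolding ff_def by (intro continuous_intros) auto

lemma ff_meas[measurable]: "ff \<in> borel_measurable borel"
  using ff_cont by (simp add: borel_measurable_continuous_onI)

lemma ff_0[simp]: "ff 0 = 0" by (simp add: ff_def)

lemma H_bound:
  assumes k: "k \<ge> (0::real)"
  shows "cosh (k*u) - ff u * sinh (k*u) \<le> cosh ((k-1)*u) / cosh u"
proof -
  have s: "0 \<le> u * sinh (k*u)"
  proof (cases "u \<ge> 0")
    case True then have "k*u \<ge> 0" using k by simp
    then have "sinh (k*u) \<ge> 0" by simp
    then show ?thesis using True by simp
  next
    case False then have "k*u \<le> 0" using k by (simp add: mult_nonneg_nonpos)
    then have "sinh (k*u) \<le> 0" by simp
    then show ?thesis using False by (simp add: mult_nonpos_nonpos)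
  qed
  have "ff u * sinh (k*u) = tanh u * sinh (k*u) + (1 - (tanh u)\<^sup>2) * (u * sinh (k*u))"
    by (simp add: ff_def algebra_simps)
  also have "\<dots> \<ge> tanh u * sinh (k*u)" using s sech_sq_nonneg[of u] by simp
  finally have "cosh (k*u) - ff u * sinh (k*u) \<le> cosh (k*u) - tanh u * sinh (k*u)" by simp
  also have "\<dots> = cosh ((k-1)*u) / cosh u"
    by (simp add: tanh_def field_simps left_diff_distrib cosh_diff)
  finally show ?thesis .
qed

lemma normal_tilt:
  assumes "s > 0"
  shows "normal_density m s u * exp (t*u) = exp (t*m + t\<^sup>2* s\<^sup>2/2) * normal_density (m + t* s\<^sup>2) s u"
proof -
  have "-(u - m)\<^sup>2/(2* s\<^sup>2) + t*u = t*m + t\<^sup>2* s\<^sup>2/2 + (-(u - (m + t* s\<^sup>2))\<^sup>2/(2* s\<^sup>2))"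
    using assms by (simp add: field_simps power2_eq_square)
  then have "exp (-(u - m)\<^sup>2/(2* s\<^sup>2)) * exp (t*u) = exp (t*m + t\<^sup>2* s\<^sup>2/2) * exp (-(u - (m + t* s\<^sup>2))\<^sup>2/(2* s\<^sup>2))"
    by (simp flip: exp_add)
  then show ?thesis unfolding normal_density_def by (simp add: algebra_simps)
qed

lemma integrable_exp_normal:
  assumes "s > 0"
  shows "integrable lborel (\<lambda>u. normal_density m s u * exp (t*u))"
  using assms by (simp add: normal_tilt)

lemma integral_exp_normal:
  assumes "s > 0"
  shows "(\<integral>u. normal_density m s u * exp (t*u) \<partial>lborel) = exp (t*m + t\<^sup>2* s\<^sup>2/2)"
  using assms by (simp add: normal_tilt)

lemma normal_density_even: "normal_density 0 s (-u) = normal_density 0 s u"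
  by (simp add: normal_density_def)

lemma integral_reflect_normal:
  "(\<integral>u. normal_density 0 s u * g (-u) \<partial>lborel) = (\<integral>u. normal_density 0 s u * g u \<partial>lborel)"
proof -
  have "(\<integral>u. normal_density 0 s u * g u \<partial>lborel) = \<bar>-1\<bar> *\<^sub>R (\<integral>u. normal_density 0 s (0 + -1*u) * g (0 + -1*u) \<partial>lborel)"
    by (rule lborel_integral_real_affine) simp
  then show ?thesis by (simp add: normal_density_even)
qed

lemma integrable_reflect_normal:
  assumes "integrable lborel (\<lambda>u. normal_density 0 s u * g u)"
  shows "integrable lborel (\<lambda>u. normal_density 0 s u * g (-u))"
proof -
  have "integrable lborel (\<lambda>u. normal_density 0 s (0 + -1*u) * g (0 + -1*u))"
    using assms by (intro lborel_integrable_real_affine) auto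
  then show ?thesis by (simp add: normal_density_even)
qed

lemma integral_affine_normal:
  assumes "A \<noteq> 0" "\<sigma> > 0"
  shows "(\<integral>y. normal_density 0 \<sigma> y * F (A*y + m) \<partial>lborel) = (\<integral>u. normal_density m (\<bar>A\<bar>*\<sigma>) u * F u \<partial>lborel)"
proof -
  have "(\<integral>u. normal_density m (\<bar>A\<bar>*\<sigma>) u * F u \<partial>lborel) =
     \<bar>A\<bar> *\<^sub>R (\<integral>y. normal_density m (\<bar>A\<bar>*\<sigma>) (m + A*y) * F (m + A*y) \<partial>lborel)"
    by (rule lborel_integral_real_affine) (simp add: assms)
  also have "\<dots> = (\<integral>y. \<bar>A\<bar> * (normal_density m (\<bar>A\<bar>*\<sigma>) (m + A*y) * F (m + A*y)) \<partial>lborel)"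
    by simp
  also have "\<dots> = (\<integral>y. normal_density 0 \<sigma> y * F (A*y + m) \<partial>lborel)"
  proof (intro Bochner_Integration.integral_cong refl)
    fix y
    have "\<bar>A\<bar> * normal_density m (\<bar>A\<bar>*\<sigma>) (m + A*y) = normal_density 0 \<sigma> y"
    proof -
      have e: "(A*y)\<^sup>2 / (2 * (\<bar>A\<bar>*\<sigma>)\<^sup>2) = y\<^sup>2/(2*\<sigma>\<^sup>2)"
        using assms by (simp add: power_mult_distrib field_simps)
      have r: "sqrt (2 * pi * (\<bar>A\<bar>*\<sigma>)\<^sup>2) = \<bar>A\<bar> * sqrt (2*pi*\<sigma>\<^sup>2)"
        by (simp add: power_mult_distrib real_sqrt_mult)
      show ?thesis unfolding normal_density_def using assms e r by (simp add: field_simps)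
    qed
    then show "\<bar>A\<bar> * (normal_density m (\<bar>A\<bar>*\<sigma>) (m + A*y) * F (m + A*y)) = normal_density 0 \<sigma> y * F (A*y + m)"
      by (simp add: algebra_simps)
  qed
  finally show ?thesis by simp
qed

lemma integral_gauss_exp:
  assumes "K \<ge> 0"
  shows "(\<integral>a. std_normal_density a * exp (-K*a\<^sup>2/2) \<partial>lborel) = 1 / sqrt (1+K)"
proof -
  let ?s = "1 / sqrt (1+K)"
  have s: "?s > 0" using assms by simp
  have eq: "std_normal_density a * exp (-K*a\<^sup>2/2) = normal_density 0 ?s a / sqrt (1+K)" for a
  proof -
    have "exp (- a\<^sup>2 / 2) * exp (-K*a\<^sup>2/2) = exp (-a\<^sup>2/(2*?s\<^sup>2))"
      using assms by (simp flip: exp_add add: field_simps power_divide)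
    moreover have "sqrt (2 * pi * ?s\<^sup>2) = sqrt (2*pi) / sqrt (1+K)"
      using assms by (simp add: power_divide real_sqrt_divide real_sqrt_mult)
    ultimately show ?thesis unfolding normal_density_def using assms
      by (simp add: std_normal_density_def field_simps)
  qed
  have "(\<integral>a. std_normal_density a * exp (-K*a\<^sup>2/2) \<partial>lborel) = (\<integral>a. normal_density 0 ?s a / sqrt (1+K) \<partial>lborel)"
    by (simp only: eq)
  also have "\<dots> = 1 / sqrt (1+K)" using integral_normal_density[OF s, of 0] by simp
  finally show ?thesis .
qed

lemma ff_minus: "ff (-u) = - ff u" by (simp add: ff_def)

lemma cosh_ratio_le1:
  assumes "\<bar>a\<bar> \<le> (1::real)"
  shows "cosh (a*u) / cosh u \<le> 1"
proof -
  have "cosh (a*u) = cosh \<bar>a*u\<bar>" by simp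
  also have "\<dots> \<le> cosh \<bar>u\<bar>"
    using assms by (subst cosh_real_nonneg_le_iff) (auto simp: abs_mult mult_left_le_one_le)
  finally show ?thesis by simp
qed

lemma cosh_ratio_le2: "cosh (a*u) / cosh u \<le> cosh (a*(u::real))"
proof -
  have "cosh (a*u) / cosh u \<le> cosh (a*u) / 1"
    by (rule divide_left_mono) (auto simp: cosh_real_ge_1)
  then show ?thesis by simp
qed

lemma lower_u:
  assumes s: "s > 0" and m: "m \<ge> 0"
  shows "(\<integral>u. normal_density m s u * (1 - ff u) \<partial>lborel) \<le> exp (- min (m\<^sup>2/s\<^sup>2) m / 2)"
proof -
  define k where "k = m / s\<^sup>2"
  have k0: "k \<ge> 0" using m s by (simp add: k_def)
  have mk: "m = k * s\<^sup>2" using s by (simp add: k_def)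
  define g where "g u = (1 - ff u) * exp (k*u)" for u
  define \<phi> where "\<phi> u = normal_density 0 s u" for u
  have tilt: "normal_density m s u = exp (-(k\<^sup>2 * s\<^sup>2/2)) * (\<phi> u * exp (k*u))" for u
    using normal_tilt[OF s, of 0 u k] unfolding \<phi>_def mk by (simp add: exp_minus field_simps)
  have intexp: "integrable lborel (\<lambda>u. \<phi> u * exp (t*u))" for t
    unfolding \<phi>_def using integrable_exp_normal[OF s] .
  have intg: "integrable lborel (\<lambda>u. \<phi> u * g u)"
  proof (rule Bochner_Integration.integrable_bound[OF integrable_mult_left[OF intexp[of k], of 3]])
    show "(\<lambda>u. \<phi> u * g u) \<in> borel_measurable lborel" unfolding \<phi>_def g_def by measurable
    show "AE x in lborel. norm (\<phi> x * g x) \<le> norm (\<phi> x * exp (k * x) * 3)"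
    proof (rule AE_I2)
      fix x
      have "\<bar>1 - ff x\<bar> \<le> 3" using ff_bound[of x] by linarith
      then have "\<bar>g x\<bar> \<le> 3 * exp (k*x)" unfolding g_def by (simp add: abs_mult)
      moreover have "\<phi> x \<ge> 0" unfolding \<phi>_def by simp
      ultimately show "norm (\<phi> x * g x) \<le> norm (\<phi> x * exp (k * x) * 3)"
        using mult_left_mono[of "\<bar>g x\<bar>" "3 * exp (k*x)" "\<phi> x"] by (simp add: abs_mult mult_ac)
    qed
  qed
  have intg': "integrable lborel (\<lambda>u. \<phi> u * g (-u))"
    using integrable_reflect_normal[of s g] intg unfolding \<phi>_def by simp
  define H where "H u = cosh (k*u) - ff u * sinh (k*u)" for u
  have Hg: "H u = (g u + g (-u)) / 2" for u
    unfolding H_def g_def by (simp add: ff_minus cosh_def sinh_def field_simps)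
  have intH: "integrable lborel (\<lambda>u. \<phi> u * H u)"
  proof -
    have "integrable lborel (\<lambda>u. (\<phi> u * g u + \<phi> u * g (-u)) / 2)"
      using intg intg' by simp
    then show ?thesis by (simp add: Hg field_simps)
  qed
  have I1: "(\<integral>u. normal_density m s u * (1 - ff u) \<partial>lborel) = exp (-(k\<^sup>2 * s\<^sup>2/2)) * (\<integral>u. \<phi> u * g u \<partial>lborel)"
    by (simp add: tilt g_def mult.assoc flip: integral_mult_right_zero) (simp add: algebra_simps)
  have I2: "(\<integral>u. \<phi> u * g u \<partial>lborel) = (\<integral>u. \<phi> u * H u \<partial>lborel)"
  proof -
    have r: "(\<integral>u. \<phi> u * g (-u) \<partial>lborel) = (\<integral>u. \<phi> u * g u \<partial>lborel)"
      unfolding \<phi>_def by (rule integral_reflect_normal)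
    have "(\<integral>u. \<phi> u * H u \<partial>lborel) = (\<integral>u. (\<phi> u * g u + \<phi> u * g (-u)) / 2 \<partial>lborel)"
      by (simp add: Hg field_simps)
    also have "\<dots> = ((\<integral>u. \<phi> u * g u \<partial>lborel) + (\<integral>u. \<phi> u * g (-u) \<partial>lborel)) / 2"
      using intg intg' by simp
    finally show ?thesis using r by simp
  qed
  have Hb: "H u \<le> cosh ((k-1)*u) / cosh u" for u
    unfolding H_def using H_bound[OF k0] .
  have phinn: "\<phi> u \<ge> 0" for u unfolding \<phi>_def by simp
  show ?thesis
  proof (cases "k \<le> 1")
    case True
    have "(\<integral>u. \<phi> u * H u \<partial>lborel) \<le> (\<integral>u. \<phi> u * 1 \<partial>lborel)"
    proof (rule integral_mono[OF intH])
      show "integrable lborel (\<lambda>u. \<phi> u * 1)" unfolding \<phi>_def using integrable_normal_density[OF s] by simp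
      fix u
      have "\<bar>k-1\<bar> \<le> 1" using True k0 by simp
      then have "H u \<le> 1" using Hb[of u] cosh_ratio_le1[of "k-1" u] by linarith
      then show "\<phi> u * H u \<le> \<phi> u * 1" using phinn[of u] by (intro mult_left_mono) auto
    qed
    also have "\<dots> = 1" unfolding \<phi>_def using s by simp
    finally have le: "(\<integral>u. \<phi> u * H u \<partial>lborel) \<le> 1" .
    have "(\<integral>u. normal_density m s u * (1 - ff u) \<partial>lborel) \<le> exp (-(k\<^sup>2 * s\<^sup>2/2)) * 1"
      unfolding I1 I2 by (rule mult_left_mono[OF le]) simp
    also have "k\<^sup>2 * s\<^sup>2 = m\<^sup>2/s\<^sup>2" using s by (simp add: k_def power_divide field_simps)
    also have "min (m\<^sup>2/s\<^sup>2) m = m\<^sup>2/s\<^sup>2"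
    proof -
      have "m\<^sup>2/s\<^sup>2 = k * m" using s by (simp add: k_def power2_eq_square field_simps)
      also have "\<dots> \<le> 1 * m" using True m by (intro mult_right_mono) auto
      finally show ?thesis by simp
    qed
    ultimately show ?thesis by simp
  next
    case False
    define a where "a = k - 1"
    have "(\<integral>u. \<phi> u * H u \<partial>lborel) \<le> (\<integral>u. (\<phi> u * exp (a*u) + \<phi> u * exp ((-a)*u)) / 2 \<partial>lborel)"
    proof (rule integral_mono[OF intH])
      show "integrable lborel (\<lambda>u. (\<phi> u * exp (a*u) + \<phi> u * exp ((-a)*u)) / 2)"
        using intexp[of a] intexp[of "-a"] by simp
      fix u
      have "H u \<le> cosh (a*u)" using Hb[of u] cosh_ratio_le2[of a u] unfolding a_def by simp
      also have "cosh (a*u) = (exp (a*u) + exp ((-a)*u))/2" by (simp add: cosh_def)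
      finally show "\<phi> u * H u \<le> (\<phi> u * exp (a*u) + \<phi> u * exp ((-a)*u)) / 2"
        using phinn[of u] mult_left_mono[of "H u" "(exp (a*u) + exp ((-a)*u))/2" "\<phi> u"]
        by (simp add: distrib_left add_divide_distrib)
    qed
    also have "\<dots> = ((\<integral>u. \<phi> u * exp (a*u) \<partial>lborel) + (\<integral>u. \<phi> u * exp ((-a)*u) \<partial>lborel)) / 2"
      using intexp[of a] intexp[of "-a"] by simp
    also have "\<dots> = exp (a\<^sup>2 * s\<^sup>2/2)"
      unfolding \<phi>_def using integral_exp_normal[OF s, of 0 a] integral_exp_normal[OF s, of 0 "-a"] by simp
    finally have le: "(\<integral>u. \<phi> u * H u \<partial>lborel) \<le> exp (a\<^sup>2 * s\<^sup>2/2)" .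
    have "(\<integral>u. normal_density m s u * (1 - ff u) \<partial>lborel) \<le> exp (-(k\<^sup>2 * s\<^sup>2/2)) * exp (a\<^sup>2 * s\<^sup>2/2)"
      unfolding I1 I2 by (rule mult_left_mono[OF le]) simp
    also have "\<dots> = exp (-(k\<^sup>2 * s\<^sup>2/2) + a\<^sup>2 * s\<^sup>2/2)" by (simp only: exp_add)
    also have "\<dots> \<le> exp (- min (m\<^sup>2/s\<^sup>2) m / 2)"
    proof -
      have e1: "-(k\<^sup>2 * s\<^sup>2/2) + a\<^sup>2 * s\<^sup>2/2 = -(2*k - 1) * s\<^sup>2 / 2"
        unfolding a_def by (simp add: power2_eq_square field_simps)
      have "m\<^sup>2/s\<^sup>2 = k * m" using s by (simp add: k_def power2_eq_square field_simps)
      also have "\<dots> \<ge> 1 * m" using False m by (intro mult_right_mono) auto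
      finally have mn: "min (m\<^sup>2/s\<^sup>2) m = m" by simp
      have "m \<le> (2*k - 1) * s\<^sup>2" using False s unfolding mk by (simp add: field_simps power2_eq_square)
      then show ?thesis unfolding e1 mn by (simp add: algebra_simps)
    qed
    finally show ?thesis .
  qed
qed

lemma FTC_line:
  fixes F f :: "real \<Rightarrow> real"
  assumes D: "\<And>x. (F has_real_derivative f x) (at x)"
    and C: "\<And>x. isCont f x"
    and I: "integrable lborel f"
    and L1: "(F \<longlongrightarrow> 0) at_bot" and L2: "(F \<longlongrightarrow> 0) at_top"
  shows "integral\<^sup>L lborel f = 0"
proof -
  have "(LBINT x=-\<infinity>..\<infinity>. f x) = 0 - 0"
  proof (rule interval_integral_FTC_integrable)
    show "- \<infinity> < (\<infinity>::ereal)" by simp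
    show "(F has_vector_derivative f x) (at x)" for x
      using D[of x] by (simp add: has_real_derivative_iff_has_vector_derivative)
    show "isCont f x" for x by (rule C)
    show "set_integrable lborel (einterval (- \<infinity>) \<infinity>) f"
      using I by (simp add: set_integrable_def)
    show "((F \<circ> real_of_ereal) \<longlongrightarrow> 0) (at_right (- \<infinity>))"
      using L1 by (simp add: ereal_tendsto_simps)
    show "((F \<circ> real_of_ereal) \<longlongrightarrow> 0) (at_left \<infinity>)"
      using L2 by (simp add: ereal_tendsto_simps)
  qed
  then show ?thesis
    by (simp add: interval_lebesgue_integral_def set_lebesgue_integral_def)
qed

lemma std_normal_deriv:
  "(std_normal_density has_real_derivative (- x * std_normal_density x)) (at x)"
  unfolding std_normal_density_def[abs_def]
  by (auto intro!: derivative_eq_intros simp: power2_eq_square field_simps)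

lemma x_std_normal_lim:
  "((\<lambda>x. x * std_normal_density x) \<longlongrightarrow> 0) at_top"
  "((\<lambda>x. x * std_normal_density x) \<longlongrightarrow> 0) at_bot"
  unfolding std_normal_density_def by real_asymp+

lemma stein_std:
  fixes G G' :: "real \<Rightarrow> real"
  assumes D: "\<And>x. (G has_real_derivative G' x) (at x)"
    and C: "\<And>x. isCont G' x"
    and B: "\<And>x. \<bar>G x\<bar> \<le> 1"
    and I: "integrable lborel (\<lambda>x. std_normal_density x * (x * G' x))"
  shows "(\<integral>x. std_normal_density x * (x * G' x) \<partial>lborel) = (\<integral>x. std_normal_density x * ((x\<^sup>2 - 1) * G x) \<partial>lborel)"
proof -
  let ?\<phi> = std_normal_density
  have CG: "isCont G x" for x using D[of x] by (rule DERIV_isCont)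
  have mG[measurable]: "G \<in> borel_measurable borel"
    using CG by (intro borel_measurable_continuous_onI continuous_at_imp_continuous_on) auto
  have I2: "integrable lborel (\<lambda>x. ?\<phi> x * ((x\<^sup>2 - 1) * G x))"
  proof (rule Bochner_Integration.integrable_bound)
    show "integrable lborel (\<lambda>x. ?\<phi> x * x^2 + ?\<phi> x)"
      using integrable_std_normal_moment[of 2] by simp
    show "(\<lambda>x. ?\<phi> x * ((x\<^sup>2 - 1) * G x)) \<in> borel_measurable lborel" by measurable
    show "AE x in lborel. norm (?\<phi> x * ((x\<^sup>2 - 1) * G x)) \<le> norm (?\<phi> x * x^2 + ?\<phi> x)"
    proof (rule AE_I2)
      fix x
      have "\<bar>(x\<^sup>2 - 1) * G x\<bar> \<le> \<bar>x\<^sup>2 - 1\<bar> * 1" unfolding abs_mult by (rule mult_left_mono[OF B]) simp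
      also have "\<dots> \<le> x^2 + 1" using zero_le_power2[of x] by (simp add: abs_le_iff)
      finally have "?\<phi> x * \<bar>(x\<^sup>2 - 1) * G x\<bar> \<le> ?\<phi> x * (x^2 + 1)" by (intro mult_left_mono) auto
      moreover have "norm (?\<phi> x * ((x\<^sup>2 - 1) * G x)) = ?\<phi> x * \<bar>(x\<^sup>2 - 1) * G x\<bar>"
        by (simp only: real_norm_def abs_mult) simp
      moreover have "norm (?\<phi> x * x^2 + ?\<phi> x) = ?\<phi> x * (x^2 + 1)" by (simp add: algebra_simps)
      ultimately show "norm (?\<phi> x * ((x\<^sup>2 - 1) * G x)) \<le> norm (?\<phi> x * x^2 + ?\<phi> x)"
        by simp
    qed
  qed
  define F where "F x = - (x * ?\<phi> x) * G x" for x
  define f where "f x = ?\<phi> x * ((x\<^sup>2 - 1) * G x) - ?\<phi> x * (x * G' x)" for x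
  have "integral\<^sup>L lborel f = 0"
  proof (rule FTC_line[where F=F])
    show "(F has_real_derivative f x) (at x)" for x
      unfolding F_def f_def
      by (auto intro!: derivative_eq_intros std_normal_deriv D simp: power2_eq_square algebra_simps)
    show "isCont f x" for x unfolding f_def std_normal_density_def
      by (intro continuous_intros CG C) auto
    show "integrable lborel f" unfolding f_def using I I2 by simp
    have bF: "norm (F x) \<le> norm (x * ?\<phi> x)" for x
      unfolding F_def using B[of x] by (simp add: abs_mult mult_left_le)
    show "(F \<longlongrightarrow> 0) at_bot"
      by (rule Lim_null_comparison[OF always_eventually tendsto_norm_zero[OF x_std_normal_lim(2)]]) (use bF in auto)
    show "(F \<longlongrightarrow> 0) at_top"
      by (rule Lim_null_comparison[OF always_eventually tendsto_norm_zero[OF x_std_normal_lim(1)]]) (use bF in auto)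
  qed
  then show ?thesis unfolding f_def using I I2 by simp
qed

lemma tanh_meas[measurable]: "(tanh::real\<Rightarrow>real) \<in> borel_measurable borel"
proof -
  have "continuous_on UNIV (\<lambda>x::real. tanh x)" by (intro continuous_intros) auto
  then show ?thesis by (rule borel_measurable_continuous_onI)
qed

lemma upper_y:
  assumes k: "k \<ge> 0"
  shows "(\<integral>a. std_normal_density a * ff (p*a + k*a\<^sup>2) \<partial>lborel) \<le> 1"
proof -
  let ?\<phi> = std_normal_density
  define G where "G a = tanh (p*a + k*a\<^sup>2)" for a
  define G' where "G' a = (1 - (tanh (p*a + k*a\<^sup>2))\<^sup>2) * (p + 2*k*a)" for a
  have D: "(G has_real_derivative G' x) (at x)" for x
    unfolding G_def G'_def
    by (auto intro!: derivative_eq_intros simp: power2_eq_square algebra_simps)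
  have C: "isCont G' x" for x unfolding G'_def by (intro continuous_intros) auto
  have B: "\<bar>G x\<bar> \<le> 1" for x unfolding G_def by (rule abs_tanh_le)
  have mG[measurable]: "G \<in> borel_measurable borel" unfolding G_def by measurable
  have mG'[measurable]: "G' \<in> borel_measurable borel" unfolding G'_def by measurable
  have I: "integrable lborel (\<lambda>x. ?\<phi> x * (x * G' x))"
  proof (rule Bochner_Integration.integrable_bound)
    show "integrable lborel (\<lambda>x. \<bar>p\<bar> * (?\<phi> x * \<bar>x\<bar>^1) + 2*k * (?\<phi> x * x^2))"
      using integrable_std_normal_moment_abs[of 1] integrable_std_normal_moment[of 2] by simp
    show "(\<lambda>x. ?\<phi> x * (x * G' x)) \<in> borel_measurable lborel" by measurable
    show "AE x in lborel. norm (?\<phi> x * (x * G' x)) \<le> norm (\<bar>p\<bar> * (?\<phi> x * \<bar>x\<bar>^1) + 2*k * (?\<phi> x * x^2))"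
    proof (rule AE_I2)
      fix x
      have s0: "0 \<le> 1 - (tanh (p*x + k*x\<^sup>2))\<^sup>2" by (rule sech_sq_nonneg)
      have s1: "1 - (tanh (p*x + k*x\<^sup>2))\<^sup>2 \<le> 1" by simp
      have "\<bar>x * G' x\<bar> = (1 - (tanh (p*x + k*x\<^sup>2))\<^sup>2) * \<bar>x * (p + 2*k*x)\<bar>"
        unfolding G'_def using s0 by (simp add: abs_mult)
      also have "\<dots> \<le> \<bar>x * (p + 2*k*x)\<bar>" using s0 s1 by (intro mult_left_le_one_le) auto
      also have "\<dots> = \<bar>p*x + 2*k*x^2\<bar>" by (simp add: algebra_simps power2_eq_square)
      also have "\<dots> \<le> \<bar>p*x\<bar> + \<bar>2*k*x^2\<bar>" by (rule abs_triangle_ineq)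
      also have "\<dots> = \<bar>p\<bar> * \<bar>x\<bar> + 2*k*x^2" using k by (simp add: abs_mult)
      finally have "\<bar>x * G' x\<bar> \<le> \<bar>p\<bar> * \<bar>x\<bar> + 2*k*x^2" .
      then have "?\<phi> x * \<bar>x * G' x\<bar> \<le> ?\<phi> x * (\<bar>p\<bar> * \<bar>x\<bar> + 2*k*x^2)" by (intro mult_left_mono) auto
      moreover have "norm (?\<phi> x * (x * G' x)) = ?\<phi> x * \<bar>x * G' x\<bar>"
        by (simp only: real_norm_def abs_mult) simp
      moreover have "norm (\<bar>p\<bar> * (?\<phi> x * \<bar>x\<bar>^1) + 2*k * (?\<phi> x * x^2)) = ?\<phi> x * (\<bar>p\<bar> * \<bar>x\<bar> + 2*k*x^2)"
        using k by (simp add: algebra_simps)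
      ultimately show "norm (?\<phi> x * (x * G' x)) \<le> norm (\<bar>p\<bar> * (?\<phi> x * \<bar>x\<bar>^1) + 2*k * (?\<phi> x * x^2))"
        by simp
    qed
  qed
  have st: "(\<integral>x. ?\<phi> x * (x * G' x) \<partial>lborel) = (\<integral>x. ?\<phi> x * ((x\<^sup>2 - 1) * G x) \<partial>lborel)"
    by (rule stein_std[OF D C B I])
  have IG: "integrable lborel (\<lambda>x. ?\<phi> x * G x)"
  proof (rule Bochner_Integration.integrable_bound)
    show "integrable lborel ?\<phi>" by simp
    show "(\<lambda>x. ?\<phi> x * G x) \<in> borel_measurable lborel" by measurable
    show "AE x in lborel. norm (?\<phi> x * G x) \<le> norm (?\<phi> x)"
      using B by (auto simp: abs_mult intro!: mult_left_le)
  qed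
  have Iff: "integrable lborel (\<lambda>x. ?\<phi> x * ff (p*x + k*x\<^sup>2))"
  proof (rule Bochner_Integration.integrable_bound)
    show "integrable lborel (\<lambda>x. ?\<phi> x * 2)" by simp
    show "(\<lambda>x. ?\<phi> x * ff (p*x + k*x\<^sup>2)) \<in> borel_measurable lborel" by measurable
    show "AE x in lborel. norm (?\<phi> x * ff (p*x + k*x\<^sup>2)) \<le> norm (?\<phi> x * 2)"
      using ff_bound by (auto simp: abs_mult intro!: mult_left_mono)
  qed
  have Ix2: "integrable lborel (\<lambda>x. ?\<phi> x * x^2)" using integrable_std_normal_moment[of 2] .
  have pw: "ff (p*x + k*x\<^sup>2) \<le> G x + x * G' x" for x
  proof -
    let ?u = "p*x + k*x\<^sup>2"
    have s0: "0 \<le> 1 - (tanh ?u)\<^sup>2" by (rule sech_sq_nonneg)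
    have "G x + x * G' x = ff ?u + (1 - (tanh ?u)\<^sup>2) * (k*x\<^sup>2)"
      unfolding G_def G'_def ff_def by (simp add: algebra_simps power2_eq_square)
    moreover have "0 \<le> (1 - (tanh ?u)\<^sup>2) * (k*x\<^sup>2)" using s0 k by simp
    ultimately show ?thesis by simp
  qed
  have "(\<integral>x. ?\<phi> x * ff (p*x + k*x\<^sup>2) \<partial>lborel) \<le> (\<integral>x. ?\<phi> x * G x + ?\<phi> x * (x * G' x) \<partial>lborel)"
  proof (rule integral_mono[OF Iff])
    show "integrable lborel (\<lambda>x. ?\<phi> x * G x + ?\<phi> x * (x * G' x))" using IG I by simp
    fix x
    have "?\<phi> x * ff (p*x + k*x\<^sup>2) \<le> ?\<phi> x * (G x + x * G' x)" using pw[of x] by (intro mult_left_mono) auto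
    then show "?\<phi> x * ff (p*x + k*x\<^sup>2) \<le> ?\<phi> x * G x + ?\<phi> x * (x * G' x)" by (simp add: distrib_left)
  qed
  also have "\<dots> = (\<integral>x. ?\<phi> x * G x \<partial>lborel) + (\<integral>x. ?\<phi> x * ((x\<^sup>2 - 1) * G x) \<partial>lborel)"
    using IG I st by simp
  also have "\<dots> = (\<integral>x. ?\<phi> x * G x + ?\<phi> x * ((x\<^sup>2 - 1) * G x) \<partial>lborel)"
  proof -
    have I2: "integrable lborel (\<lambda>x. ?\<phi> x * ((x\<^sup>2 - 1) * G x))"
    proof -
      have "integrable lborel (\<lambda>x. ?\<phi> x * x^2 * G x - ?\<phi> x * G x)"
      proof (rule Bochner_Integration.integrable_diff[OF _ IG])
        show "integrable lborel (\<lambda>x. ?\<phi> x * x^2 * G x)"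
        proof (rule Bochner_Integration.integrable_bound[OF Ix2])
          show "(\<lambda>x. ?\<phi> x * x^2 * G x) \<in> borel_measurable lborel" by measurable
          show "AE x in lborel. norm (?\<phi> x * x^2 * G x) \<le> norm (?\<phi> x * x^2)"
            using B by (auto simp: abs_mult intro!: mult_left_le)
        qed
      qed
      then show ?thesis by (simp add: algebra_simps)
    qed
    show ?thesis using IG I2 by simp
  qed
  also have "\<dots> = (\<integral>x. ?\<phi> x * x^2 * G x \<partial>lborel)"
    by (simp add: algebra_simps power2_eq_square)
  also have "\<dots> \<le> (\<integral>x. ?\<phi> x * x^2 \<partial>lborel)"
  proof (rule integral_mono)
    show "integrable lborel (\<lambda>x. ?\<phi> x * x^2 * G x)"
    proof (rule Bochner_Integration.integrable_bound[OF Ix2])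
      show "(\<lambda>x. ?\<phi> x * x^2 * G x) \<in> borel_measurable lborel" by measurable
      show "AE x in lborel. norm (?\<phi> x * x^2 * G x) \<le> norm (?\<phi> x * x^2)"
        using B by (auto simp: abs_mult intro!: mult_left_le)
    qed
    show "integrable lborel (\<lambda>x. ?\<phi> x * x^2)" by (rule Ix2)
    fix x show "?\<phi> x * x^2 * G x \<le> ?\<phi> x * x^2"
      using B[of x] by (intro mult_left_le) auto
  qed
  also have "\<dots> = 1" using integral_std_normal_moment_even[of 1] by simp
  finally show ?thesis .
qed

lemma min_eq_lemma:
  assumes q: "(q::real) > 0" and c: "c > 0" and b: "b \<ge> 0" and a: "a \<noteq> 0"
  shows "min ((a*c*(a*b))\<^sup>2 / (\<bar>a*c\<bar>*q)\<^sup>2) (a*c*(a*b)) = min (q\<^sup>2 * c) b * b / q\<^sup>2 * a\<^sup>2"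
proof -
  have d1: "(\<bar>a*c\<bar>*q)\<^sup>2 = (a*c)\<^sup>2 * q\<^sup>2" by (simp only: power_mult_distrib power2_abs)
  have d2: "(a*c*(a*b))\<^sup>2 = (a*c)\<^sup>2 * (a*b)\<^sup>2" by (simp only: power_mult_distrib)
  have ac: "(a*c)\<^sup>2 \<noteq> 0" using a c by simp
  have e1: "(a*c*(a*b))\<^sup>2 / (\<bar>a*c\<bar>*q)\<^sup>2 = a\<^sup>2 * (b\<^sup>2 / q\<^sup>2)"
    unfolding d1 d2 using ac by (simp add: power_mult_distrib)
  have e2: "a*c*(a*b) = a\<^sup>2 * (c * b)" by (simp add: power2_eq_square)
  have a2: "a\<^sup>2 > 0" using a by simp
  have q2: "q\<^sup>2 > 0" using q by simp
  show ?thesis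
  proof (cases "q\<^sup>2 * c \<le> b")
    case True
    have "q\<^sup>2 * c * b \<le> b * b" using True b by (rule mult_right_mono)
    then have "c * b \<le> b\<^sup>2 / q\<^sup>2" using q2 by (simp add: pos_le_divide_eq power2_eq_square mult_ac)
    then have "a\<^sup>2 * (c * b) \<le> a\<^sup>2 * (b\<^sup>2 / q\<^sup>2)" using a2 by (intro mult_left_mono) auto
    then have mn: "min (a\<^sup>2 * (b\<^sup>2 / q\<^sup>2)) (a\<^sup>2 * (c * b)) = a\<^sup>2 * (c * b)" by (simp add: min_def)
    have rh: "min (q\<^sup>2 * c) b * b / q\<^sup>2 * a\<^sup>2 = a\<^sup>2 * (c * b)" using True q2 by simp
    show ?thesis unfolding e1 unfolding e2 mn rh ..
  next
    case False
    then have "b \<le> q\<^sup>2 * c" by simp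
    then have "b * b \<le> q\<^sup>2 * c * b" using b by (rule mult_right_mono)
    then have "b\<^sup>2 / q\<^sup>2 \<le> c * b" using q2 by (simp add: pos_divide_le_eq power2_eq_square mult_ac)
    then have "a\<^sup>2 * (b\<^sup>2 / q\<^sup>2) \<le> a\<^sup>2 * (c * b)" using a2 by (intro mult_left_mono) auto
    then have mn: "min (a\<^sup>2 * (b\<^sup>2 / q\<^sup>2)) (a\<^sup>2 * (c * b)) = a\<^sup>2 * (b\<^sup>2 / q\<^sup>2)" by (simp add: min_def)
    have rh: "min (q\<^sup>2 * c) b * b / q\<^sup>2 * a\<^sup>2 = a\<^sup>2 * (b\<^sup>2 / q\<^sup>2)" using False
      by (simp add: power2_eq_square)
    show ?thesis unfolding e1 unfolding e2 mn rh ..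
  qed
qed

lemma lower_y:
  assumes q: "q > 0" and c: "c > 0" and b: "b \<ge> 0"
  shows "1 - exp (- (min (q\<^sup>2 * c) b * b / q\<^sup>2 * a\<^sup>2) / 2)
           \<le> (\<integral>y. normal_density 0 q y * ff (a * c * (y + a*b)) \<partial>lborel)"
proof (cases "a = 0")
  case True then show ?thesis by simp
next
  case False
  define A where "A = a * c"
  define m where "m = a * c * (a * b)"
  define s where "s = \<bar>A\<bar> * q"
  have A0: "A \<noteq> 0" using False c by (simp add: A_def)
  have s0: "s > 0" using A0 q by (simp add: s_def)
  have "m = (a*a)*(c*b)" by (simp add: m_def algebra_simps)
  then have m0: "m \<ge> 0" using c b by simp
  have "(\<integral>y. normal_density 0 q y * ff (a * c * (y + a*b)) \<partial>lborel) =
        (\<integral>y. normal_density 0 q y * ff (A*y + m) \<partial>lborel)"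
    by (simp add: A_def m_def algebra_simps)
  also have "\<dots> = (\<integral>u. normal_density m s u * ff u \<partial>lborel)"
    unfolding s_def by (rule integral_affine_normal[OF A0 q])
  also have "\<dots> = 1 - (\<integral>u. normal_density m s u * (1 - ff u) \<partial>lborel)"
  proof -
    have I: "integrable lborel (\<lambda>u. normal_density m s u * ff u)"
    proof (rule Bochner_Integration.integrable_bound)
      show "integrable lborel (\<lambda>u. normal_density m s u * 2)" using integrable_normal_density[OF s0] by simp
      show "(\<lambda>u. normal_density m s u * ff u) \<in> borel_measurable lborel" by measurable
      show "AE x in lborel. norm (normal_density m s x * ff x) \<le> norm (normal_density m s x * 2)"
        using ff_bound by (auto simp: abs_mult intro!: mult_left_mono)
    qed
    have "(\<integral>u. normal_density m s u * (1 - ff u) \<partial>lborel) =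
          (\<integral>u. normal_density m s u - normal_density m s u * ff u \<partial>lborel)"
      by (simp add: algebra_simps)
    also have "\<dots> = 1 - (\<integral>u. normal_density m s u * ff u \<partial>lborel)"
      using I integral_normal_density[OF s0, of m] integrable_normal_density[OF s0, of m] by simp
    finally show ?thesis by simp
  qed
  finally have eq: "(\<integral>y. normal_density 0 q y * ff (a * c * (y + a*b)) \<partial>lborel) =
      1 - (\<integral>u. normal_density m s u * (1 - ff u) \<partial>lborel)" .
  have mn: "min (m\<^sup>2/s\<^sup>2) m = min (q\<^sup>2 * c) b * b / q\<^sup>2 * a\<^sup>2"
    unfolding m_def s_def A_def by (rule min_eq_lemma[OF q c b False])
  have L: "(\<integral>u. normal_density m s u * (1 - ff u) \<partial>lborel) \<le> exp (- min (m\<^sup>2/s\<^sup>2) m / 2)"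
    by (rule lower_u[OF s0 m0])
  then have L2: "(\<integral>u. normal_density m s u * (1 - ff u) \<partial>lborel) \<le> exp (- (min (q\<^sup>2 * c) b * b / q\<^sup>2 * a\<^sup>2) / 2)"
    by (simp only: mn)
  show ?thesis unfolding eq using L2 by linarith
qed

theorem lemma10:
  fixes b1 b1s b2s \<sigma> \<sigma>2 S :: real
  assumes "b1 > 0" and "b1s \<ge> 0" and "b2s \<ge> 0" and "\<sigma> > 0"
    and "\<sigma>2 = sqrt (\<sigma>\<^sup>2 + b2s\<^sup>2)"
    and "S = (\<integral>p. (let u = fst p * b1 / \<sigma>\<^sup>2 * (snd p + fst p * b1s)
                     in tanh u + u * deriv tanh u)
              \<partial>(density lborel std_normal_density \<Otimes>\<^sub>M density lborel (normal_density 0 \<sigma>2)))"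
  shows "1 - 1 / sqrt (1 + min (\<sigma>2\<^sup>2 / \<sigma>\<^sup>2 * b1) b1s * b1s / \<sigma>2\<^sup>2) \<le> S \<and> S \<le> 1"
proof -
  define c where "c = b1 / \<sigma>\<^sup>2"
  have c0: "c > 0" using assms(1,4) by (simp add: c_def)
  have q0: "\<sigma>2 > 0" using assms(4,5) by (simp add: add_pos_nonneg)
  define M1 where "M1 = density lborel std_normal_density"
  define M2 where "M2 = density lborel (normal_density 0 \<sigma>2)"
  have p1: "prob_space M1" unfolding M1_def by (rule prob_space_normal_density) simp
  have p2: "prob_space M2" unfolding M2_def by (rule prob_space_normal_density) (rule q0)
  interpret M1: prob_space M1 by (rule p1)
  interpret M2: prob_space M2 by (rule p2)
  interpret PS: pair_sigma_finite M1 M2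
    unfolding pair_sigma_finite_def using p1 p2 prob_space_imp_sigma_finite by blast
  have pm: "prob_space (M1 \<Otimes>\<^sub>M M2)"
    by (rule prob_spaceI) (simp add: space_pair_measure M2.emeasure_pair_measure_Times M1.emeasure_space_1 M2.emeasure_space_1)
  interpret PM: prob_space "M1 \<Otimes>\<^sub>M M2" by (rule pm)
  define Fq where "Fq a y = ff (a * c * (y + a * b1s))" for a y
  have integrand: "(\<lambda>p. let u = fst p * b1 / \<sigma>\<^sup>2 * (snd p + fst p * b1s) in tanh u + u * deriv tanh u)
      = (\<lambda>(a,y). Fq a y)"
    by (auto simp: fun_eq_iff Fq_def c_def ff_def deriv_tanh_eq Let_def)
  have S_eq: "S = integral\<^sup>L (M1 \<Otimes>\<^sub>M M2) (\<lambda>(a,y). Fq a y)"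
    using assms(6) unfolding integrand M1_def M2_def .
  have mFq1[measurable]: "Fq a \<in> borel_measurable borel" for a unfolding Fq_def[abs_def] by measurable
  have mFq2[measurable]: "(\<lambda>a. Fq a y) \<in> borel_measurable borel" for y unfolding Fq_def[abs_def] by measurable
  have meas: "(\<lambda>(a,y). Fq a y) \<in> borel_measurable (M1 \<Otimes>\<^sub>M M2)"
    unfolding Fq_def M1_def M2_def by measurable
  have int: "integrable (M1 \<Otimes>\<^sub>M M2) (\<lambda>(a,y). Fq a y)"
  proof (rule PM.integrable_const_bound[where B=2])
    show "AE x in M1 \<Otimes>\<^sub>M M2. norm ((\<lambda>(a,y). Fq a y) x) \<le> 2"
      by (rule AE_I2) (auto simp: Fq_def ff_bound)
  qed (rule meas)
  have upper: "S \<le> 1"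
  proof -
    have "S = (\<integral>y. (\<integral>a. Fq a y \<partial>M1) \<partial>M2)"
      using PS.integral_snd[OF int] S_eq by simp
    also have "\<dots> \<le> 1"
    proof (rule M2.integral_le_const)
      show "integrable M2 (\<lambda>y. \<integral>a. Fq a y \<partial>M1)" by (rule PS.integrable_snd[OF int])
      show "AE y in M2. (\<integral>a. Fq a y \<partial>M1) \<le> 1"
      proof (rule AE_I2)
        fix y
        have "(\<integral>a. Fq a y \<partial>M1) = (\<integral>a. std_normal_density a * Fq a y \<partial>lborel)"
          unfolding M1_def by (subst integral_density) auto
        also have "\<dots> = (\<integral>a. std_normal_density a * ff ((c*y)*a + (c*b1s)*a\<^sup>2) \<partial>lborel)"
          by (simp add: Fq_def algebra_simps power2_eq_square)
        also have "\<dots> \<le> 1" by (rule upper_y) (use c0 assms(2) in simp)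
        finally show "(\<integral>a. Fq a y \<partial>M1) \<le> 1" .
      qed
    qed
    finally show ?thesis .
  qed
  define K where "K = min (\<sigma>2\<^sup>2 / \<sigma>\<^sup>2 * b1) b1s * b1s / \<sigma>2\<^sup>2"
  have K0: "K \<ge> 0" using assms(1,2,4) q0 by (simp add: K_def)
  have Kc: "K = min (\<sigma>2\<^sup>2 * c) b1s * b1s / \<sigma>2\<^sup>2" by (simp add: K_def c_def)
  have lower: "1 - 1 / sqrt (1 + K) \<le> S"
  proof -
    have inner: "1 - exp (-K*a\<^sup>2/2) \<le> (\<integral>y. Fq a y \<partial>M2)" for a
    proof -
      have E: "(\<integral>y. Fq a y \<partial>M2) = (\<integral>y. normal_density 0 \<sigma>2 y * Fq a y \<partial>lborel)"
        unfolding M2_def by (subst integral_density) auto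
      have L: "1 - exp (- (min (\<sigma>2\<^sup>2 * c) b1s * b1s / \<sigma>2\<^sup>2 * a\<^sup>2) / 2)
           \<le> (\<integral>y. normal_density 0 \<sigma>2 y * ff (a * c * (y + a*b1s)) \<partial>lborel)"
        by (rule lower_y[OF q0 c0 assms(2)])
      have X: "- (min (\<sigma>2\<^sup>2 * c) b1s * b1s / \<sigma>2\<^sup>2 * a\<^sup>2) / 2 = -K*a\<^sup>2/2"
        unfolding Kc by simp
      from L have "1 - exp (-K*a\<^sup>2/2) \<le> (\<integral>y. normal_density 0 \<sigma>2 y * ff (a * c * (y + a*b1s)) \<partial>lborel)"
        by (simp only: X)
      then show ?thesis using E unfolding Fq_def by linarith
    qed
    have intlow: "integrable M1 (\<lambda>a. 1 - exp (-K*a\<^sup>2/2))"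
    proof (rule M1.integrable_const_bound[where B=1])
      show "(\<lambda>a. 1 - exp (-K*a\<^sup>2/2)) \<in> borel_measurable M1" unfolding M1_def by measurable
      show "AE x in M1. norm (1 - exp (-K*x\<^sup>2/2)) \<le> 1"
      proof (rule AE_I2)
        fix x
        have "-K*x\<^sup>2/2 \<le> 0" using K0 by (simp add: mult_nonneg_nonneg)
        then have "exp (-K*x\<^sup>2/2) \<le> 1" by simp
        then show "norm (1 - exp (-K*x\<^sup>2/2)) \<le> 1" using exp_gt_zero[of "-K*x\<^sup>2/2"] by simp
      qed
    qed
    have "1 - 1 / sqrt (1 + K) = (\<integral>a. std_normal_density a * (1 - exp (-K*a\<^sup>2/2)) \<partial>lborel)"
    proof -
      have i1: "integrable lborel (\<lambda>a. std_normal_density a * exp (-K*a\<^sup>2/2))"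
      proof (rule Bochner_Integration.integrable_bound)
        show "integrable lborel std_normal_density" by simp
        show "(\<lambda>a. std_normal_density a * exp (-K*a\<^sup>2/2)) \<in> borel_measurable lborel" by measurable
        show "AE x in lborel. norm (std_normal_density x * exp (-K*x\<^sup>2/2)) \<le> norm (std_normal_density x)"
        proof (rule AE_I2)
          fix x
          have "-K*x\<^sup>2/2 \<le> 0" using K0 by (simp add: mult_nonneg_nonneg)
          then have "exp (-K*x\<^sup>2/2) \<le> 1" by simp
          then show "norm (std_normal_density x * exp (-K*x\<^sup>2/2)) \<le> norm (std_normal_density x)"
            by (simp add: abs_mult mult_left_le)
        qed
      qed
      have "(\<integral>a. std_normal_density a * (1 - exp (-K*a\<^sup>2/2)) \<partial>lborel)
          = (\<integral>a. std_normal_density a - std_normal_density a * exp (-K*a\<^sup>2/2) \<partial>lborel)"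
        by (simp add: algebra_simps)
      also have "\<dots> = 1 - (\<integral>a. std_normal_density a * exp (-K*a\<^sup>2/2) \<partial>lborel)"
        using i1 by simp
      also have "\<dots> = 1 - 1 / sqrt (1 + K)" using integral_gauss_exp[OF K0] by simp
      finally show ?thesis by simp
    qed
    also have "\<dots> = (\<integral>a. 1 - exp (-K*a\<^sup>2/2) \<partial>M1)"
      unfolding M1_def by (subst integral_density) auto
    also have "\<dots> \<le> (\<integral>a. (\<integral>y. Fq a y \<partial>M2) \<partial>M1)"
      by (rule integral_mono[OF intlow PS.integrable_fst[OF int] inner])
    also have "\<dots> = S" using PS.integral_fst[OF int] S_eq by simp
    finally show ?thesis .
  qed
  show ?thesis using upper lower unfolding K_def by simp
qed

end
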